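(* Let $\lambda$ be a dominant integral weight of $\mathfrak{sl}_{r+1}$ and $b\in\mathcal B(\lambda+\rho)$. For $1\le j\le i\le r$, the entry $a_{i,j}$ of the BZL path $\psi_{\mathbf i}(b)$ is boxed by rule (B-I) if and only if the corresponding entry $\mathbf a_{i-j+1,i}$ of $\mathbf a(b)$ is boxed by rule (B-II).
   Context: Fix $r\ge1$ and $\mathfrak g=\mathfrak{sl}_{r+1}$ with index set $I=\{1,\dots,r\}$, fundamental weights $\omega_1,\dots,\omega_r$, $N=r(r+1)/2$, and $\rho=\sum_i\omega_i$. For a dominant integral weight $\mu=\sum_i m_i\omega_i$, $\mathcal B(\mu)$ is identified (Kashiwara–Nakashima) with the set of semistandard Young tableaux with entries in $\{1,\dots,r+1\}$ of the shape having $m_i$ columns of height $i$; an entry equal to $k$ is a $k$-box. A tableau is identified with the tensor product of its entries read column by column from right to left, each column top to bottom, and $\tilde e_i,\tilde f_i$ act by the signature rule: for each factor write $-$ if it equals $i+1$, $+$ if it equals $i$; repeatedly cancel adjacent $+-$ pairs; $\tilde e_i$ changes the factor of the rightmost remaining $-$ from $i+1$ to $i$ (giving $0$ if none), $\tilde f_i$ changes the factor of the leftmost remaining $+$ from $i$ to $i+1$ (giving $0$ if none). For dominant $\lambda$, $\lambda+\rho$ is viewed as the partition with row lengths $\ell_1>\ell_2>\cdots>\ell_r>\ell_{r+1}=0$, and $\theta_i=\ell_i-\ell_{i+1}$ for $1\le i\le r$. Fix the long word $\mathbf i=(i_1,\dots,i_N)=(1,2,1,3,2,1,\dots,r,\dots,2,1)$.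 The BZL path $\psi_{\mathbf i}(b)=(a_1,\dots,a_N)$: $a_k$ is maximal with $\tilde e_{i_k}^{a_k}\cdots\tilde e_{i_1}^{a_1}b\ne0$. Triangular form: $a_{i,j}=a_{i(i-1)/2+j}$ for $1\le j\le i\le r$. Rule (B-I): box $a_k$ if $\tilde f_{i_k}\tilde e_{i_{k-1}}^{a_{k-1}}\cdots\tilde e_{i_1}^{a_1}b=0$. For $b\in\mathcal B(\lambda+\rho)$ and $1\le i\le j\le r$: $\mathbf a_{i,j}$ is the number of $(j+1)$-boxes in rows $1$ through $i$ of $b$; $\mathbf b_{i,j}$ is the number of boxes in the $i$th row of $b$ with entry $\ge j+1$, with convention $\mathbf b_{i,j}=0$ if $i=r+1$ or $j=r+1$. Rule (B-II): box $\mathbf a_{i,j}$ if $\mathbf b_{i,j}\ge\theta_i+\mathbf b_{i+1,j+1}$. *)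

theory Defs
  imports Main
begin

text \<open>A word is the list of tensor factors (left to right). For a colour i, a factor
equal to i is a '+', a factor equal to i+1 is a '-'. Scanning left to right, each '-'
cancels the nearest uncancelled '+' to its left (this is exactly the result of
repeatedly cancelling adjacent +- pairs). sig_scan returns the positions of the
uncancelled '-' (increasing order) and of the uncancelled '+' (as a stack, decreasing order).\<close>

fun sig_scan :: "nat \<Rightarrow> nat \<Rightarrow> nat list \<Rightarrow> nat list \<Rightarrow> nat list \<Rightarrow> nat list \<times> nat list" where
  "sig_scan i p [] pl mn = (mn, pl)"
| "sig_scan i p (x # xs) pl mn =
     (if x = i then sig_scan i (Suc p) xs (p # pl) mn
      else if x = Suc i then
        (case pl of [] \<Rightarrow> sig_scan i (Suc p) xs [] (mn @ [p])
                    | q # qs \<Rightarrow> sig_scan i (Suc p) xs qs mn)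
      else sig_scan i (Suc p) xs pl mn)"

definition unmatched_minus :: "nat \<Rightarrow> nat list \<Rightarrow> nat list" where
  "unmatched_minus i w = fst (sig_scan i 0 w [] [])"

definition unmatched_plus :: "nat \<Rightarrow> nat list \<Rightarrow> nat list" where
  "unmatched_plus i w = snd (sig_scan i 0 w [] [])"

text \<open>e_i: change the rightmost remaining '-' from i+1 to i (None = 0).\<close>
definition e_word :: "nat \<Rightarrow> nat list \<Rightarrow> nat list option" where
  "e_word i w = (if unmatched_minus i w = [] then None
                 else Some (w[last (unmatched_minus i w) := i]))"

text \<open>f_i: change the leftmost remaining '+' from i to i+1 (None = 0).
The '+' stack is in decreasing order, so the leftmost one is its last element.\<close>
definition f_word :: "nat \<Rightarrow> nat list \<Rightarrow> nat list option" where
  "f_word i w = (if unmatched_plus i w = [] then None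
                 else Some (w[last (unmatched_plus i w) := Suc i]))"

fun e_pow :: "nat \<Rightarrow> nat \<Rightarrow> nat list \<Rightarrow> nat list option" where
  "e_pow i 0 w = Some w"
| "e_pow i (Suc k) w = Option.bind (e_pow i k w) (e_word i)"

definition eps :: "nat \<Rightarrow> nat list \<Rightarrow> nat" where
  "eps i w = (GREATEST a. e_pow i a w \<noteq> None)"

fun lw :: "nat \<Rightarrow> nat list" where
  "lw 0 = []"
| "lw (Suc i) = lw i @ rev [1..<Suc (Suc i)]"

fun bzl_apply :: "nat list \<Rightarrow> nat list \<Rightarrow> nat list" where
  "bzl_apply [] w = w"
| "bzl_apply (i # is) w = bzl_apply is (the (e_pow i (eps i w) w))"

definition bzl_path :: "nat \<Rightarrow> nat list \<Rightarrow> nat list" where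
  "bzl_path r w = map (\<lambda>k. eps (lw r ! k) (bzl_apply (take k (lw r)) w)) [0..<length (lw r)]"

text \<open>Rule (B-I): a_k (k 1-based) is boxed iff
  f_{i_k} e_{i_{k-1}}^{a_{k-1}} ... e_{i_1}^{a_1} b = 0.\<close>
definition boxed_BI :: "nat \<Rightarrow> nat list \<Rightarrow> nat \<Rightarrow> bool" where
  "boxed_BI r w k = (f_word (lw r ! (k - 1)) (bzl_apply (take (k - 1) (lw r)) w) = None)"

text \<open>Index of the triangular entry a_{i,j}.\<close>
definition tri_idx :: "nat \<Rightarrow> nat \<Rightarrow> nat" where
  "tri_idx i j = i * (i - 1) div 2 + j"

text \<open>lambda = sum m_i omega_i (only m 1..m r matter). Row lengths of lambda+rho:
  ell_i = sum_{k=i}^{r} (m_k + 1); ell_{r+1} = 0.\<close>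
definition ell :: "nat \<Rightarrow> (nat \<Rightarrow> nat) \<Rightarrow> nat \<Rightarrow> nat" where
  "ell r m i = (\<Sum>k = i..r. m k + 1)"

definition theta :: "nat \<Rightarrow> (nat \<Rightarrow> nat) \<Rightarrow> nat \<Rightarrow> nat" where
  "theta r m i = ell r m i - ell r m (Suc i)"

text \<open>A tableau T : row -> column -> entry (rows 1..r, columns 1..ell_i) that is
semistandard with entries in 1..r+1; this is B(lambda+rho).\<close>
definition SSYT :: "nat \<Rightarrow> (nat \<Rightarrow> nat) \<Rightarrow> (nat \<Rightarrow> nat \<Rightarrow> nat) \<Rightarrow> bool" where
  "SSYT r m T \<longleftrightarrow>
     (\<forall>i\<in>{1..r}. \<forall>c\<in>{1..ell r m i}. 1 \<le> T i c \<and> T i c \<le> Suc r) \<and>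
     (\<forall>i\<in>{1..r}. \<forall>c\<in>{1..<ell r m i}. T i c \<le> T i (Suc c)) \<and>
     (\<forall>i\<in>{1..<r}. \<forall>c\<in>{1..ell r m (Suc i)}. T i c < T (Suc i) c)"

definition col_height :: "nat \<Rightarrow> (nat \<Rightarrow> nat) \<Rightarrow> nat \<Rightarrow> nat" where
  "col_height r m c = card {i\<in>{1..r}. c \<le> ell r m i}"

definition reading_word :: "nat \<Rightarrow> (nat \<Rightarrow> nat) \<Rightarrow> (nat \<Rightarrow> nat \<Rightarrow> nat) \<Rightarrow> nat list" where
  "reading_word r m T =
     concat (map (\<lambda>c. map (\<lambda>i. T i c) [1..<Suc (col_height r m c)]) (rev [1..<Suc (ell r m 1)]))"

definition bold_a :: "nat \<Rightarrow> (nat \<Rightarrow> nat) \<Rightarrow> (nat \<Rightarrow> nat \<Rightarrow> nat) \<Rightarrow> nat \<Rightarrow> nat \<Rightarrow> nat" where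
  "bold_a r m T i j = (\<Sum>i'\<in>{1..i}. card {c\<in>{1..ell r m i'}. T i' c = Suc j})"

definition bold_b :: "nat \<Rightarrow> (nat \<Rightarrow> nat) \<Rightarrow> (nat \<Rightarrow> nat \<Rightarrow> nat) \<Rightarrow> nat \<Rightarrow> nat \<Rightarrow> nat" where
  "bold_b r m T i j = (if i = Suc r \<or> j = Suc r then 0
                       else card {c\<in>{1..ell r m i}. Suc j \<le> T i c})"

definition boxed_BII :: "nat \<Rightarrow> (nat \<Rightarrow> nat) \<Rightarrow> (nat \<Rightarrow> nat \<Rightarrow> nat) \<Rightarrow> nat \<Rightarrow> nat \<Rightarrow> bool" where
  "boxed_BII r m T i j \<longleftrightarrow> theta r m i + bold_b r m T (Suc i) (Suc j) \<le> bold_b r m T i j"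

end

theory Submission
  imports Defs
begin


lemma scan_append: "sig_scan i p (xs @ ys) pl mn = (case sig_scan i p xs pl mn of (mn', pl') \<Rightarrow> sig_scan i (p + length xs) ys pl' mn')"
  by (induction xs arbitrary: p pl mn) (auto split: list.split)

lemma scan_neutral: "\<forall>x\<in>set xs. x \<noteq> i \<and> x \<noteq> Suc i \<Longrightarrow> sig_scan i p xs pl mn = (mn, pl)"
  by (induction xs arbitrary: p pl mn) auto

lemma scan_prefix: "\<exists>X. fst (sig_scan i p xs pl mn) = mn @ X"
proof (induction xs arbitrary: p pl mn)
  case Nil then show ?case by simp
next
  case (Cons x xs)
  show ?case
  proof (cases "x = i")
    case True then show ?thesis using Cons.IH[of "Suc p" "p # pl" mn] by simp
  next
    case False
    show ?thesis
    proof (cases "x = Suc i")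
      case True
      show ?thesis
      proof (cases pl)
        case Nil
        then show ?thesis using True False Cons.IH[of "Suc p" "[]" "mn @ [p]"] by auto
      next
        case (Cons q qs)
        then show ?thesis using True False Cons.IH[of "Suc p" qs mn] by auto
      qed
    next
      case False2: False
      then show ?thesis using False Cons.IH[of "Suc p" pl mn] by auto
    qed
  qed
qed

lemma scan_B: "fst (sig_scan i p ys pl mn) = mn \<Longrightarrow> sig_scan i p ys (pl @ zs) mn = (mn, snd (sig_scan i p ys pl mn) @ zs)"
proof (induction ys arbitrary: p pl mn)
  case Nil then show ?case by simp
next
  case (Cons x xs)
  show ?case
  proof (cases "x = i")
    case True then show ?thesis using Cons.IH[of "Suc p" "p # pl" mn] Cons.prems by simp
  next
    case False
    show ?thesis
    proof (cases "x = Suc i")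
      case True
      show ?thesis
      proof (cases pl)
        case Nil
        obtain X where "fst (sig_scan i (Suc p) xs [] (mn @ [p])) = (mn @ [p]) @ X" using scan_prefix by blast
        then show ?thesis using True False Nil Cons.prems by auto
      next
        case (Cons q qs)
        then show ?thesis using True False Cons.IH[of "Suc p" qs mn] \<open>fst (sig_scan i p (x # xs) pl mn) = mn\<close> by auto
      qed
    next
      case False2: False
      then show ?thesis using False Cons.IH[of "Suc p" pl mn] Cons.prems by auto
    qed
  qed
qed

lemma scan_noplus: "i \<notin> set xs \<Longrightarrow> snd (sig_scan i p xs [] mn) = []"
  by (induction xs arbitrary: p mn) auto

definition nounm :: "nat \<Rightarrow> nat list \<Rightarrow> bool" where
  "nounm i ys = (\<forall>p mn. fst (sig_scan i p ys [] mn) = mn)"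

lemma um_last:
  assumes "i \<notin> set xs1" "\<forall>x\<in>set xs2. x\<noteq>i \<and> x \<noteq> Suc i" "nounm i ys"
  shows "unmatched_minus i (xs1 @ Suc i # xs2 @ ys) = fst (sig_scan i 0 xs1 [] []) @ [length xs1]"
proof -
  obtain mn1 pl1 where S: "sig_scan i 0 xs1 [] [] = (mn1, pl1)" by fastforce
  have "pl1 = []" using scan_noplus[OF assms(1), of 0 "[]"] S by simp
  then show ?thesis using S assms(2,3)
    by (simp add: unmatched_minus_def scan_append scan_neutral nounm_def)
qed

lemma e_word_step:
  assumes "i \<notin> set xs1" "\<forall>x\<in>set xs2. x\<noteq>i \<and> x \<noteq> Suc i" "nounm i ys"
  shows "e_word i (xs1 @ Suc i # xs2 @ ys) = Some (xs1 @ i # xs2 @ ys)"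
  using um_last[OF assms] by (simp add: e_word_def list_update_append)

lemma nounm_cons:
  assumes "\<forall>x\<in>set xs2. x\<noteq>i \<and> x \<noteq> Suc i" "nounm i ys"
  shows "nounm i (i # xs2 @ ys)"
  unfolding nounm_def
proof (intro allI)
  fix p mn
  have "fst (sig_scan i (Suc p + length xs2) ys [] mn) = mn" using assms(2) by (simp add: nounm_def)
  then have "fst (sig_scan i (Suc p + length xs2) ys ([] @ [p]) mn) = mn" using scan_B[of i "Suc p + length xs2" ys "[]" mn "[p]"] by simp
  then show "fst (sig_scan i p (i # xs2 @ ys) [] mn) = mn" using assms(1)
    by (simp add: scan_append scan_neutral)
qed

lemma e_word_none:
  assumes "\<forall>x\<in>set xs. x\<noteq>i \<and> x \<noteq> Suc i" "nounm i ys"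
  shows "e_word i (xs @ ys) = None"
  using assms by (simp add: e_word_def unmatched_minus_def scan_append scan_neutral nounm_def)

lemma e_pow_Suc': "e_pow i (Suc n) w = Option.bind (e_word i w) (e_pow i n)"
proof (induction n arbitrary: w)
  case 0 then show ?case by (cases "e_word i w") auto
next
  case (Suc n)
  have "e_pow i (Suc (Suc n)) w = Option.bind (e_pow i (Suc n) w) (e_word i)" by simp
  also have "\<dots> = Option.bind (Option.bind (e_word i w) (e_pow i n)) (e_word i)" using Suc by simp
  also have "\<dots> = Option.bind (e_word i w) (e_pow i (Suc n))" by (cases "e_word i w") auto
  finally show ?case .
qed

definition sg :: "nat \<Rightarrow> nat \<Rightarrow> nat" where "sg i x = (if x = Suc i then i else x)"

lemma emax:
  "i \<notin> set xs \<Longrightarrow> nounm i ys \<Longrightarrow> length (filter (\<lambda>x. x = Suc i) xs) = n \<Longrightarrow>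
   e_pow i n (xs @ ys) = Some (map (sg i) xs @ ys) \<and> e_pow i (Suc n) (xs @ ys) = None"
proof (induction n arbitrary: xs ys)
  case 0
  then have N: "\<forall>x\<in>set xs. x\<noteq>i \<and> x \<noteq> Suc i" by (auto simp: filter_empty_conv)
  then have "map (sg i) xs = xs" by (auto simp: sg_def intro: map_idI)
  then show ?case using e_word_none[OF N 0(2)] by simp
next
  case (Suc n)
  then have "filter (\<lambda>x. x = Suc i) xs \<noteq> []" by auto
  then have "Suc i \<in> set xs" by (auto simp: filter_empty_conv)
  then obtain xs1 xs2 where X: "xs = xs1 @ Suc i # xs2" "Suc i \<notin> set xs2" by (meson split_list_last)
  have N2: "\<forall>x\<in>set xs2. x\<noteq>i \<and> x \<noteq> Suc i" using X Suc.prems(1) by auto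
  have i1: "i \<notin> set xs1" using X Suc.prems(1) by auto
  have E: "e_word i (xs @ ys) = Some (xs1 @ (i # xs2 @ ys))" using e_word_step[OF i1 N2 Suc.prems(2)] X by simp
  have nu: "nounm i (i # xs2 @ ys)" using nounm_cons[OF N2 Suc.prems(2)] .
  have f2: "filter (\<lambda>x. x = Suc i) xs2 = []" using X(2) by (auto simp: filter_empty_conv)
  have cnt: "length (filter (\<lambda>x. x = Suc i) xs1) = n" using Suc.prems(3) X f2 by simp
  have IH: "e_pow i n (xs1 @ (i # xs2 @ ys)) = Some (map (sg i) xs1 @ (i # xs2 @ ys)) \<and>
     e_pow i (Suc n) (xs1 @ (i # xs2 @ ys)) = None" using Suc.IH[OF i1 nu cnt] .
  have "map (sg i) xs2 = xs2" using N2 by (auto simp: sg_def intro: map_idI)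
  then have M: "map (sg i) xs @ ys = map (sg i) xs1 @ (i # xs2 @ ys)" using X by (simp add: sg_def)
  have "e_pow i (Suc n) (xs @ ys) = Option.bind (e_word i (xs@ys)) (e_pow i n)" by (rule e_pow_Suc')
  then have "e_pow i (Suc n) (xs @ ys) = e_pow i n (xs1 @ (i # xs2 @ ys))" using E by simp
  moreover have "e_pow i (Suc (Suc n)) (xs @ ys) = Option.bind (e_word i (xs@ys)) (e_pow i (Suc n))" by (rule e_pow_Suc')
  then have "e_pow i (Suc (Suc n)) (xs @ ys) = e_pow i (Suc n) (xs1 @ (i # xs2 @ ys))" using E by (simp del: e_pow.simps)
  ultimately show ?case using IH M by (simp del: e_pow.simps)
qed

lemma e_pow_None_mono: "e_pow i k w = None \<Longrightarrow> k \<le> k' \<Longrightarrow> e_pow i k' w = None"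
proof (induction k')
  case 0 then show ?case by simp
next
  case (Suc k')
  show ?case
  proof (cases "k = Suc k'")
    case True then show ?thesis using Suc.prems by simp
  next
    case False
    then have "e_pow i k' w = None" using Suc by simp
    then show ?thesis by simp
  qed
qed

lemma emax_eps:
  assumes "i \<notin> set xs" "nounm i ys"
  shows "eps i (xs @ ys) = length (filter (\<lambda>x. x = Suc i) xs)"
    and "the (e_pow i (eps i (xs @ ys)) (xs @ ys)) = map (sg i) xs @ ys"
proof -
  let ?n = "length (filter (\<lambda>x. x = Suc i) xs)"
  have E: "e_pow i ?n (xs @ ys) = Some (map (sg i) xs @ ys)" "e_pow i (Suc ?n) (xs @ ys) = None"
    using emax[OF assms refl] by auto
  show 1: "eps i (xs @ ys) = ?n"
    unfolding eps_def
  proof (rule Greatest_equality)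
    show "e_pow i ?n (xs @ ys) \<noteq> None" using E by simp
    fix y assume "e_pow i y (xs @ ys) \<noteq> None"
    then show "y \<le> ?n" using e_pow_None_mono[OF E(2)] by (meson not_less_eq_eq)
  qed
  show "the (e_pow i (eps i (xs @ ys)) (xs @ ys)) = map (sg i) xs @ ys" using 1 E by simp
qed

lemma f_word_split:
  assumes "i \<notin> set xs"
  shows "f_word i (xs @ ys) = None \<longleftrightarrow> snd (sig_scan i (length xs) ys [] (fst (sig_scan i 0 xs [] []))) = []"
proof -
  obtain mn1 pl1 where S: "sig_scan i 0 xs [] [] = (mn1, pl1)" by fastforce
  have "pl1 = []" using scan_noplus[OF assms, of 0 "[]"] S by simp
  then show ?thesis using S by (simp add: f_word_def unmatched_plus_def scan_append)
qed

lemma bzl_apply_append: "bzl_apply (xs @ ys) w = bzl_apply ys (bzl_apply xs w)"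
  by (induction xs arbitrary: w) auto




definition stt :: "(nat\<Rightarrow>nat\<Rightarrow>nat) \<Rightarrow> nat \<Rightarrow> nat \<Rightarrow> nat \<Rightarrow> nat \<Rightarrow> nat" where
  "stt T i c k col = (if Suc i < T k col then T k col else if T k col \<le> i then k else if k \<le> c then Suc c else k)"

definition colw :: "nat \<Rightarrow> (nat \<Rightarrow> nat) \<Rightarrow> (nat\<Rightarrow>nat\<Rightarrow>nat) \<Rightarrow> nat \<Rightarrow> nat list" where
  "colw r m S col = map (\<lambda>k. S k col) [1..<Suc (col_height r m col)]"

lemma rw_eq: "reading_word r m S = concat (map (colw r m S) (rev [1..<Suc (ell r m 1)]))"
  unfolding reading_word_def colw_def ..

lemma dc: assumes "S \<subseteq> {1..(n::nat)}" "\<forall>x\<in>S. \<forall>y. 1 \<le> y \<longrightarrow> y \<le> x \<longrightarrow> y \<in> S"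
  shows "S = {1..card S}"
proof (cases "S = {}")
  case True then show ?thesis by simp
next
  case False
  have fin: "finite S" using assms(1) finite_subset by blast
  let ?M = "Max S"
  have M: "?M \<in> S" using fin False by simp
  have "S = {1..?M}"
  proof
    show "S \<subseteq> {1..?M}" using assms(1) fin by auto
    show "{1..?M} \<subseteq> S" using assms(2) M by auto
  qed
  then show ?thesis by (metis card_atLeastAtMost diff_Suc_1)
qed

locale tab =
  fixes r :: nat and m :: "nat \<Rightarrow> nat" and T :: "nat \<Rightarrow> nat \<Rightarrow> nat"
  assumes r1: "1 \<le> r" and ss: "SSYT r m T"
begin

abbreviation L where "L \<equiv> ell r m"

lemma L_Suc: "k \<le> r \<Longrightarrow> L k = L (Suc k) + m k + 1"
  unfolding ell_def by (simp add: sum.atLeast_Suc_atMost)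

lemma L_zero: "r < k \<Longrightarrow> L k = 0"
  unfolding ell_def by simp

lemma L_mono: "k \<le> k' \<Longrightarrow> L k' \<le> L k"
  unfolding ell_def by (rule sum_mono2) auto

lemma L_pos: "1 \<le> L k \<Longrightarrow> k \<le> r"
  using L_zero by (metis not_le not_one_le_zero)

definition cell where "cell k col \<longleftrightarrow> 1 \<le> k \<and> k \<le> r \<and> 1 \<le> col \<and> col \<le> L k"

lemma height_set: "{i\<in>{1..r}. col \<le> L i} = {1..col_height r m col}"
proof -
  have "{i\<in>{1..r}. col \<le> L i} = {1..card {i\<in>{1..r}. col \<le> L i}}"
    apply (rule dc[of _ r])
     apply auto
    using L_mono order_trans by blast
  then show ?thesis by (simp add: col_height_def)
qed

lemma cell_iff: "1 \<le> col \<Longrightarrow> (k \<in> {1..col_height r m col} \<longleftrightarrow> cell k col)"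
proof -
  have "k \<in> {1..col_height r m col} \<longleftrightarrow> k \<in> {i\<in>{1..r}. col \<le> L i}" using height_set[of col] by simp
  then show "1 \<le> col \<Longrightarrow> ?thesis" unfolding cell_def by auto
qed

lemma ent: "cell k col \<Longrightarrow> 1 \<le> T k col \<and> T k col \<le> Suc r"
  using ss unfolding SSYT_def cell_def by auto

lemma rowstep: "cell k col \<Longrightarrow> col < L k \<Longrightarrow> T k col \<le> T k (Suc col)"
  using ss unfolding SSYT_def cell_def by auto

lemma colstep: "cell (Suc k) col \<Longrightarrow> 1 \<le> k \<Longrightarrow> T k col < T (Suc k) col"
  using ss unfolding SSYT_def cell_def by auto

lemma row_mono: "cell k col' \<Longrightarrow> 1 \<le> col \<Longrightarrow> col \<le> col' \<Longrightarrow> T k col \<le> T k col'"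
proof (induction col')
  case 0 then show ?case by simp
next
  case (Suc n)
  show ?case
  proof (cases "col = Suc n")
    case True then show ?thesis by simp
  next
    case False
    then have "col \<le> n" using Suc by simp
    have cn: "cell k n" using Suc.prems \<open>col \<le> n\<close> unfolding cell_def by auto
    have "T k col \<le> T k n" using Suc.IH[OF cn Suc.prems(2) \<open>col \<le> n\<close>] .
    also have "\<dots> \<le> T k (Suc n)" using rowstep[OF cn] Suc.prems unfolding cell_def by auto
    finally show ?thesis .
  qed
qed

lemma col_mono: "cell k' col \<Longrightarrow> 1 \<le> k \<Longrightarrow> k < k' \<Longrightarrow> T k col < T k' col"
proof (induction k')
  case 0 then show ?case by simp
next
  case (Suc n)
  have c: "cell (Suc n) col" by fact
  have cn: "cell n col" using c Suc.prems L_mono[of n "Suc n"] unfolding cell_def by auto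
  show ?case
  proof (cases "k = n")
    case True then show ?thesis using colstep[OF c] Suc.prems by simp
  next
    case False
    then have "T k col < T n col" using Suc.IH[OF cn Suc.prems(2)] Suc.prems by simp
    also have "\<dots> < T (Suc n) col" using colstep[OF c] Suc.prems \<open>k \<noteq> n\<close> by simp
    finally show ?thesis .
  qed
qed

lemma col_le: "cell k' col \<Longrightarrow> 1 \<le> k \<Longrightarrow> k \<le> k' \<Longrightarrow> T k col \<le> T k' col"
  using col_mono by (metis le_eq_less_or_eq less_imp_le)

lemma ge_row: "cell k col \<Longrightarrow> k \<le> T k col"
proof (induction k)
  case 0 then show ?case by simp
next
  case (Suc n)
  show ?case
  proof (cases n)
    case 0 then show ?thesis using ent[OF Suc.prems] by simp
  next
    case (Suc n')
    have cn: "cell n col" using Suc.prems L_mono[of n "Suc n"] \<open>n = Suc n'\<close> unfolding cell_def by auto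
    then show ?thesis using Suc.IH colstep[OF Suc.prems] \<open>n = Suc n'\<close> by fastforce
  qed
qed

lemma cell_lower: "cell k' col \<Longrightarrow> 1 \<le> k \<Longrightarrow> k \<le> k' \<Longrightarrow> cell k col"
  unfolding cell_def using L_mono by (meson le_trans)

definition pp where "pp i c = card {col\<in>{1..L c}. T c col \<le> i}"
definition qq where "qq i c = card {col\<in>{1..L (Suc c)}. T (Suc c) col \<le> Suc i}"

lemma pset: assumes "1 \<le> c" "c \<le> r" shows "{col\<in>{1..L c}. T c col \<le> i} = {1..pp i c}"
  unfolding pp_def
proof (rule dc[of _ "L c"])
  show "{col \<in> {1..L c}. T c col \<le> i} \<subseteq> {1..L c}" by auto
  show "\<forall>x\<in>{col \<in> {1..L c}. T c col \<le> i}. \<forall>y. 1 \<le> y \<longrightarrow> y \<le> x \<longrightarrow> y \<in> {col \<in> {1..L c}. T c col \<le> i}"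
  proof (intro ballI allI impI)
    fix x y assume x: "x \<in> {col \<in> {1..L c}. T c col \<le> i}" and y: "1 \<le> y" "y \<le> x"
    then have cx: "cell c x" using assms by (auto simp: cell_def)
    have "T c y \<le> T c x" using row_mono[OF cx y] .
    then show "y \<in> {col \<in> {1..L c}. T c col \<le> i}" using x y by auto
  qed
qed

lemma pchar: assumes "1 \<le> c" "c \<le> r" "1 \<le> col" "col \<le> L c" shows "(T c col \<le> i \<longleftrightarrow> col \<le> pp i c)"
proof -
  have "col \<in> {col\<in>{1..L c}. T c col \<le> i} \<longleftrightarrow> col \<in> {1..pp i c}" using pset[OF assms(1,2)] by simp
  then show ?thesis using assms by auto
qed

lemma p_le: "pp i c \<le> L c"
proof -
  have "card {col\<in>{1..L c}. T c col \<le> i} \<le> card {1..L c}" by (rule card_mono) auto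
  then show ?thesis unfolding pp_def by simp
qed

lemma qset: assumes "1 \<le> c" shows "{col\<in>{1..L (Suc c)}. T (Suc c) col \<le> Suc i} = {1..qq i c}"
  unfolding qq_def
proof (rule dc[of _ "L (Suc c)"])
  show "{col \<in> {1..L (Suc c)}. T (Suc c) col \<le> Suc i} \<subseteq> {1..L (Suc c)}" by auto
  show "\<forall>x\<in>{col \<in> {1..L (Suc c)}. T (Suc c) col \<le> Suc i}. \<forall>y. 1 \<le> y \<longrightarrow> y \<le> x \<longrightarrow> y \<in> {col \<in> {1..L (Suc c)}. T (Suc c) col \<le> Suc i}"
  proof (intro ballI allI impI)
    fix x y assume x: "x \<in> {col \<in> {1..L (Suc c)}. T (Suc c) col \<le> Suc i}" and y: "1 \<le> y" "y \<le> x"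
    then have "1 \<le> L (Suc c)" by auto
    then have "Suc c \<le> r" using L_pos by blast
    then have cx: "cell (Suc c) x" using assms x by (auto simp: cell_def)
    have "T (Suc c) y \<le> T (Suc c) x" using row_mono[OF cx y] .
    then show "y \<in> {col \<in> {1..L (Suc c)}. T (Suc c) col \<le> Suc i}" using x y by auto
  qed
qed

lemma qchar: assumes "1 \<le> c" "1 \<le> col" "col \<le> L (Suc c)" shows "(T (Suc c) col \<le> Suc i \<longleftrightarrow> col \<le> qq i c)"
proof -
  have "col \<in> {col\<in>{1..L (Suc c)}. T (Suc c) col \<le> Suc i} \<longleftrightarrow> col \<in> {1..qq i c}" using qset[OF assms(1)] by simp
  then show ?thesis using assms by auto
qed

lemma q_le: "qq i c \<le> L (Suc c)"
proof -
  have "card {col\<in>{1..L (Suc c)}. T (Suc c) col \<le> Suc i} \<le> card {1..L (Suc c)}" by (rule card_mono) auto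
  then show ?thesis unfolding qq_def by simp
qed

end



definition neut :: "nat \<Rightarrow> nat list \<Rightarrow> bool" where "neut c xs = (\<forall>x\<in>set xs. x \<noteq> c \<and> x \<noteq> Suc c)"

lemma scan_col1: "neut c us \<Longrightarrow> neut c vs \<Longrightarrow> sig_scan c P (us @ c # vs) pl mn = (mn, (P + length us) # pl)"
  by (simp add: scan_append scan_neutral neut_def)

lemma scan_col2: "neut c us \<Longrightarrow> neut c vs \<Longrightarrow> sig_scan c P (us @ c # Suc c # vs) pl mn = (mn, pl)"
  by (simp add: scan_append scan_neutral neut_def)

lemma scan_concatA: "\<forall>w\<in>set ws. \<exists>us vs. w = us @ c # vs \<and> neut c us \<and> neut c vs \<Longrightarrow>
  fst (sig_scan c P (concat ws) pl mn) = mn \<and> length (snd (sig_scan c P (concat ws) pl mn)) = length ws + length pl"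
proof (induction ws arbitrary: P pl)
  case Nil then show ?case by simp
next
  case (Cons w ws)
  then obtain us vs where w: "w = us @ c # vs" "neut c us" "neut c vs" by auto
  have hw: "sig_scan c P w pl mn = (mn, (P + length us) # pl)" using scan_col1[OF w(2,3)] w(1) by simp
  have "sig_scan c P (concat (w # ws)) pl mn = (case sig_scan c P w pl mn of (mn', pl') \<Rightarrow> sig_scan c (P + length w) (concat ws) pl' mn')"
    by (simp only: concat.simps scan_append)
  also have "\<dots> = sig_scan c (P + length w) (concat ws) ((P + length us) # pl) mn" by (simp only: hw) simp
  finally have "sig_scan c P (concat (w # ws)) pl mn = sig_scan c (P + length w) (concat ws) ((P + length us) # pl) mn" .
  then show ?case using Cons.IH[of "P + length w" "(P + length us) # pl"] Cons.prems by simp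
qed

lemma scan_concatB: "\<forall>w\<in>set ws. \<exists>us vs. w = us @ c # Suc c # vs \<and> neut c us \<and> neut c vs \<Longrightarrow>
  sig_scan c P (concat ws) pl mn = (mn, pl)"
proof (induction ws arbitrary: P)
  case Nil then show ?case by simp
next
  case (Cons w ws)
  then obtain us vs where w: "w = us @ c # Suc c # vs" "neut c us" "neut c vs" by auto
  have hw: "sig_scan c P w pl mn = (mn, pl)" using scan_col2[OF w(2,3)] w(1) by simp
  have "sig_scan c P (concat (w # ws)) pl mn = (case sig_scan c P w pl mn of (mn', pl') \<Rightarrow> sig_scan c (P + length w) (concat ws) pl' mn')"
    by (simp only: concat.simps scan_append)
  also have "\<dots> = sig_scan c (P + length w) (concat ws) pl mn" by (simp only: hw) simp
  finally have "sig_scan c P (concat (w # ws)) pl mn = sig_scan c (P + length w) (concat ws) pl mn" .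
  then show ?case using Cons.IH[of "P + length w"] Cons.prems by simp
qed

lemma upt_split2: assumes "a \<le> b" "b \<le> d" shows "[a..<d] = [a..<b] @ [b..<d]"
proof -
  have "[a..<b + (d-b)] = [a..<b] @ [b..<b+(d-b)]" by (rule upt_add_eq_append) fact
  then show ?thesis using assms by simp
qed

lemma upt_split3: assumes "a \<le> b" "b < d" shows "[a..<d] = [a..<b] @ b # [Suc b..<d]"
proof -
  have "[b..<d] = b # [Suc b..<d]" by (rule upt_conv_Cons) fact
  then show ?thesis using upt_split2[of a b d] assms by simp
qed

lemma colw_map: assumes "\<forall>col\<in>set cs. \<forall>k\<in>{1..col_height r m col}. S' k col = f (S k col)"
  shows "concat (map (colw r m S') cs) = map f (concat (map (colw r m S) cs))"
proof -
  have A: "map f (concat (map (colw r m S) cs)) = concat (map (\<lambda>col. map f (colw r m S col)) cs)"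
    by (simp add: map_concat comp_def)
  moreover have B: "map (colw r m S') cs = map (\<lambda>col. map f (colw r m S col)) cs"
  proof (rule map_cong[OF refl])
    fix col assume col: "col \<in> set cs"
    have "map (\<lambda>k. S' k col) [1..<Suc (col_height r m col)] = map (\<lambda>k. f (S k col)) [1..<Suc (col_height r m col)]"
    proof (rule map_cong[OF refl])
      fix k assume "k \<in> set [1..<Suc (col_height r m col)]"
      then have "k \<in> {1..col_height r m col}" by auto
      then show "S' k col = f (S k col)" using assms col by blast
    qed
    then show "colw r m S' col = map f (colw r m S col)" by (simp add: colw_def)
  qed
  ultimately show ?thesis by (simp only:)
qed

context tab begin

lemma L1: "1 \<le> c \<Longrightarrow> L c \<le> L 1" using L_mono by simp

lemma stt_c1: assumes "1 \<le> c" "c \<le> i" "i \<le> r" "cell k col" "pp i c < col"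
  shows "stt T i c k col \<noteq> c"
proof -
  have "k = c \<Longrightarrow> T k col \<le> i \<Longrightarrow> False" using pchar[of c col i] assms by (auto simp: cell_def)
  then show ?thesis using assms by (auto simp: stt_def)
qed

lemma F1: assumes "1 \<le> c" "c \<le> i" "i \<le> r" "cell (Suc c) col" "pp i c < col" "T (Suc c) col \<le> Suc i"
  shows False
proof -
  have "T c col < T (Suc c) col" using colstep[OF assms(4) assms(1)] .
  moreover have "cell c col" using cell_lower[OF assms(4) assms(1)] by simp
  ultimately show False using pchar[of c col i] assms by (auto simp: cell_def)
qed

lemma stt_c2: assumes "1 \<le> c" "c \<le> i" "i \<le> r" "cell k col" "pp i c < col"
  shows "stt T i (c - 1) k col = sg c (stt T i c k col)"
proof -
  have "k = Suc c \<Longrightarrow> T k col \<le> Suc i \<Longrightarrow> False" using F1 assms by blast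
  then show ?thesis using assms by (auto simp: stt_def sg_def)
qed

lemma G1: assumes "1 \<le> c" "c \<le> i" "i \<le> r" "cell k col" "col \<le> pp i c" "k \<le> c"
  shows "T k col \<le> i"
proof -
  have cc: "cell c col" using assms p_le[of i c] unfolding cell_def by auto
  have "T c col \<le> i" using pchar[of c col i] assms cc by (auto simp: cell_def)
  moreover have "T k col \<le> T c col" using col_le[OF cc] assms by (auto simp: cell_def)
  ultimately show ?thesis by simp
qed

lemma stt_c3: assumes "1 \<le> c" "c \<le> i" "i \<le> r" "cell k col" "col \<le> pp i c"
  shows "stt T i (c - 1) k col = stt T i c k col"
  using G1[OF assms] assms by (auto simp: stt_def)

lemma qp: assumes "1 \<le> c" "c \<le> i" "i \<le> r" shows "qq i c \<le> pp i c"
proof (cases "qq i c = 0")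
  case True then show ?thesis by simp
next
  case False
  let ?q = "qq i c"
  have q1: "1 \<le> ?q" using False by simp
  have "?q \<le> L (Suc c)" by (rule q_le)
  then have "Suc c \<le> r" using L_pos q1 by (meson le_trans)
  then have cq: "cell (Suc c) ?q" using q1 \<open>?q \<le> L (Suc c)\<close> unfolding cell_def by simp
  have "T (Suc c) ?q \<le> Suc i" using qchar[of c ?q i] assms q1 \<open>?q \<le> L (Suc c)\<close> by simp
  moreover have "T c ?q < T (Suc c) ?q" using colstep[OF cq assms(1)] .
  moreover have "cell c ?q" using cell_lower[OF cq assms(1)] by simp
  ultimately show ?thesis using pchar[of c ?q i] assms by (auto simp: cell_def)
qed

lemma us_neut: assumes "1 \<le> c" "c \<le> i" "i \<le> r" "1 \<le> col" "col \<le> pp i c"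
  shows "neut c (map (\<lambda>k. stt T i c k col) [1..<c])"
proof -
  have cc: "cell c col" using assms p_le[of i c] unfolding cell_def by auto
  { fix k assume k: "1 \<le> k" "k < c"
    have ck: "cell k col" using cell_lower[OF cc k(1)] k by simp
    have "T k col \<le> i" using G1[OF assms(1-3) ck assms(5)] k by simp
    then have "stt T i c k col = k" by (auto simp: stt_def)
  }
  then show ?thesis by (auto simp: neut_def)
qed

lemma colA: assumes "1 \<le> c" "c \<le> i" "i \<le> r" "qq i c < col" "col \<le> pp i c"
  shows "\<exists>us vs. colw r m (stt T i c) col = us @ c # vs \<and> neut c us \<and> neut c vs"
proof -
  have c1: "1 \<le> col" using assms by simp
  have cc: "cell c col" using assms p_le[of i c] unfolding cell_def by auto
  let ?h = "col_height r m col"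
  have ch: "c \<le> ?h" using cell_iff[OF c1, of c] cc by auto
  have sp: "[1..<Suc ?h] = [1..<c] @ c # [Suc c..<Suc ?h]" using upt_split3[of 1 c "Suc ?h"] ch assms by simp
  have vc: "stt T i c c col = c" using pchar[of c col i] assms cc by (auto simp: stt_def cell_def)
  have vs: "neut c (map (\<lambda>k. stt T i c k col) [Suc c..<Suc ?h])"
  proof -
    { fix k assume k: "Suc c \<le> k" "k \<le> ?h"
      have ck: "cell k col" using cell_iff[OF c1, of k] k by auto
      have nq: "k = Suc c \<Longrightarrow> T k col \<le> Suc i \<Longrightarrow> False"
        using qchar[of c col i] assms ck by (auto simp: cell_def)
      have "stt T i c k col \<noteq> c \<and> stt T i c k col \<noteq> Suc c" using nq k assms by (auto simp: stt_def)
    }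
    then show ?thesis by (auto simp: neut_def)
  qed
  have "colw r m (stt T i c) col = map (\<lambda>k. stt T i c k col) [1..<Suc ?h]" by (simp only: colw_def)
  also have "\<dots> = map (\<lambda>k. stt T i c k col) ([1..<c] @ c # [Suc c..<Suc ?h])" by (simp only: sp)
  also have "\<dots> = map (\<lambda>k. stt T i c k col) [1..<c] @ c # map (\<lambda>k. stt T i c k col) [Suc c..<Suc ?h]"
    by (simp only: map_append list.map vc)
  finally have eq: "colw r m (stt T i c) col = map (\<lambda>k. stt T i c k col) [1..<c] @ c # map (\<lambda>k. stt T i c k col) [Suc c..<Suc ?h]" .
  show ?thesis
    by (intro exI conjI, rule eq, rule us_neut[OF assms(1-3) c1 assms(5)], rule vs)
qed

lemma colB: assumes "1 \<le> c" "c \<le> i" "i \<le> r" "1 \<le> col" "col \<le> qq i c"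
  shows "\<exists>us vs. colw r m (stt T i c) col = us @ c # Suc c # vs \<and> neut c us \<and> neut c vs"
proof -
  have cp: "col \<le> pp i c" using qp[OF assms(1-3)] assms by simp
  have c1: "1 \<le> col" using assms by simp
  have cc: "cell c col" using assms cp p_le[of i c] unfolding cell_def by auto
  have qL: "col \<le> L (Suc c)" using q_le[of i c] assms by simp
  then have "Suc c \<le> r" using L_pos c1 by (meson le_trans)
  then have cs: "cell (Suc c) col" using qL c1 unfolding cell_def by simp
  let ?h = "col_height r m col"
  have ch: "Suc c \<le> ?h" using cell_iff[OF c1, of "Suc c"] cs by auto
  have sp: "[1..<Suc ?h] = [1..<c] @ c # Suc c # [Suc (Suc c)..<Suc ?h]"
    using upt_split3[of 1 c "Suc ?h"] upt_conv_Cons[of "Suc c" "Suc ?h"] ch assms by simp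
  have vc: "stt T i c c col = c" using pchar[of c col i] assms cc cp by (auto simp: stt_def cell_def)
  have vc2: "stt T i c (Suc c) col = Suc c" using qchar[of c col i] assms qL by (auto simp: stt_def)
  have vs: "neut c (map (\<lambda>k. stt T i c k col) [Suc (Suc c)..<Suc ?h])"
    using assms by (auto simp: neut_def stt_def)
  have "colw r m (stt T i c) col = map (\<lambda>k. stt T i c k col) [1..<Suc ?h]" by (simp only: colw_def)
  also have "\<dots> = map (\<lambda>k. stt T i c k col) ([1..<c] @ c # Suc c # [Suc (Suc c)..<Suc ?h])" by (simp only: sp)
  also have "\<dots> = map (\<lambda>k. stt T i c k col) [1..<c] @ c # Suc c # map (\<lambda>k. stt T i c k col) [Suc (Suc c)..<Suc ?h]"
    by (simp only: map_append list.map vc vc2)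
  finally have eq: "colw r m (stt T i c) col = map (\<lambda>k. stt T i c k col) [1..<c] @ c # Suc c # map (\<lambda>k. stt T i c k col) [Suc (Suc c)..<Suc ?h]" .
  show ?thesis
    by (intro exI conjI, rule eq, rule us_neut[OF assms(1-3) c1 cp], rule vs)
qed

end



context tab begin

lemma step: assumes "1 \<le> c" "c \<le> i" "i \<le> r"
  shows "bzl_apply [c] (reading_word r m (stt T i c)) = reading_word r m (stt T i (c - 1))"
    and "f_word c (reading_word r m (stt T i c)) = None \<longleftrightarrow> pp i c \<le> qq i c"
proof -
  let ?p = "pp i c" and ?q = "qq i c"
  have pL: "?p \<le> L 1" using p_le[of i c] L1[OF assms(1)] by simp
  have qp: "?q \<le> ?p" using qp[OF assms] .
  define cs1 where "cs1 = rev [Suc ?p..<Suc (L 1)]"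
  define cs2 where "cs2 = rev [1..<Suc ?p]"
  have "[1..<Suc (L 1)] = [1..<Suc ?p] @ [Suc ?p..<Suc (L 1)]" using upt_split2[of 1 "Suc ?p" "Suc (L 1)"] pL by simp
  then have split: "rev [1..<Suc (L 1)] = cs1 @ cs2" by (simp add: cs1_def cs2_def)
  have RW: "\<And>S. reading_word r m S = concat (map (colw r m S) cs1) @ concat (map (colw r m S) cs2)"
    by (simp only: rw_eq split map_append concat_append)
  have cells1: "cell k col \<and> ?p < col" if "col \<in> set cs1" "k \<in> {1..col_height r m col}" for k col
  proof -
    have "Suc ?p \<le> col" "col \<le> L 1" using that(1) by (auto simp: cs1_def)
    then show ?thesis using cell_iff[of col k] that(2) by auto
  qed
  have cells2: "cell k col \<and> col \<le> ?p" if "col \<in> set cs2" "k \<in> {1..col_height r m col}" for k col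
  proof -
    have "1 \<le> col" "col \<le> ?p" using that(1) by (auto simp: cs2_def)
    then show ?thesis using cell_iff[of col k] that(2) by auto
  qed
  let ?X = "\<lambda>S. concat (map (colw r m S) cs1)"
  let ?Y = "\<lambda>S. concat (map (colw r m S) cs2)"
  have X1: "c \<notin> set (?X (stt T i c))"
  proof
    assume "c \<in> set (?X (stt T i c))"
    then obtain col where col: "col \<in> set cs1" "c \<in> set (colw r m (stt T i c) col)" by auto
    have "c \<in> (\<lambda>k. stt T i c k col) ` set [1..<Suc (col_height r m col)]" using col(2) unfolding colw_def set_map .
    then obtain k where k: "k \<in> set [1..<Suc (col_height r m col)]" "stt T i c k col = c" by (metis imageE)
    have "k \<in> {1..col_height r m col}" using k(1) by auto
    then have "cell k col \<and> ?p < col" using cells1 col(1) by blast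
    then show False using stt_c1[OF assms] k(2) by blast
  qed
  have X2: "?X (stt T i (c - 1)) = map (sg c) (?X (stt T i c))"
    by (rule colw_map) (use cells1 stt_c2[OF assms] in blast)
  have Y2: "?Y (stt T i (c - 1)) = map id (?Y (stt T i c))"
    by (rule colw_map) (use cells2 stt_c3[OF assms] in auto)
  define A where "A = rev [Suc ?q..<Suc ?p]"
  define B where "B = rev [1..<Suc ?q]"
  have "[1..<Suc ?p] = [1..<Suc ?q] @ [Suc ?q..<Suc ?p]" using upt_split2[of 1 "Suc ?q" "Suc ?p"] qp by simp
  then have cs2s: "cs2 = A @ B" by (simp add: cs2_def A_def B_def)
  have Aw: "\<forall>w\<in>set (map (colw r m (stt T i c)) A). \<exists>us vs. w = us @ c # vs \<and> neut c us \<and> neut c vs"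
  proof
    fix w assume "w \<in> set (map (colw r m (stt T i c)) A)"
    then obtain col where col: "col \<in> set A" "w = colw r m (stt T i c) col" by auto
    then have "?q < col" "col \<le> ?p" by (auto simp: A_def)
    then show "\<exists>us vs. w = us @ c # vs \<and> neut c us \<and> neut c vs" using colA[OF assms] col(2) by simp
  qed
  have Bw: "\<forall>w\<in>set (map (colw r m (stt T i c)) B). \<exists>us vs. w = us @ c # Suc c # vs \<and> neut c us \<and> neut c vs"
  proof
    fix w assume "w \<in> set (map (colw r m (stt T i c)) B)"
    then obtain col where col: "col \<in> set B" "w = colw r m (stt T i c) col" by auto
    then have "1 \<le> col" "col \<le> ?q" by (auto simp: B_def)
    then show "\<exists>us vs. w = us @ c # Suc c # vs \<and> neut c us \<and> neut c vs" using colB[OF assms] col(2) by simp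
  qed
  have Ysc: "fst (sig_scan c P (?Y (stt T i c)) [] mn) = mn \<and> length (snd (sig_scan c P (?Y (stt T i c)) [] mn)) = ?p - ?q" for P mn
  proof -
    let ?WA = "concat (map (colw r m (stt T i c)) A)"
    let ?WB = "concat (map (colw r m (stt T i c)) B)"
    have Y: "?Y (stt T i c) = ?WA @ ?WB" by (simp add: cs2s)
    obtain mn1 pl1 where S1: "sig_scan c P ?WA [] mn = (mn1, pl1)" by fastforce
    have a: "mn1 = mn" "length pl1 = ?p - ?q"
      using scan_concatA[OF Aw, of P "[]" mn] S1 by (auto simp: A_def)
    have b: "sig_scan c (P + length ?WA) ?WB pl1 mn1 = (mn1, pl1)" using scan_concatB[OF Bw] by blast
    show ?thesis unfolding Y scan_append S1 using a b by simp
  qed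
  have nu: "nounm c (?Y (stt T i c))" using Ysc by (simp add: nounm_def)
  have E: "the (e_pow c (eps c (?X (stt T i c) @ ?Y (stt T i c))) (?X (stt T i c) @ ?Y (stt T i c)))
      = map (sg c) (?X (stt T i c)) @ ?Y (stt T i c)" using emax_eps(2)[OF X1 nu] .
  have "bzl_apply [c] (?X (stt T i c) @ ?Y (stt T i c)) = the (e_pow c (eps c (?X (stt T i c) @ ?Y (stt T i c))) (?X (stt T i c) @ ?Y (stt T i c)))"
    by (simp only: bzl_apply.simps)
  also have "\<dots> = ?X (stt T i (c - 1)) @ ?Y (stt T i (c - 1))" by (simp only: E X2 Y2 list.map_id)
  finally show "bzl_apply [c] (reading_word r m (stt T i c)) = reading_word r m (stt T i (c - 1))"
    by (simp only: RW)
  have "f_word c (reading_word r m (stt T i c)) = None \<longleftrightarrow>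
        snd (sig_scan c (length (?X (stt T i c))) (?Y (stt T i c)) [] (fst (sig_scan c 0 (?X (stt T i c)) [] []))) = []"
    unfolding RW by (rule f_word_split[OF X1])
  also have "\<dots> \<longleftrightarrow> length (snd (sig_scan c (length (?X (stt T i c))) (?Y (stt T i c)) [] (fst (sig_scan c 0 (?X (stt T i c)) [] [])))) = 0"
    by (simp only: length_0_conv)
  also have "\<dots> \<longleftrightarrow> ?p - ?q = 0" by (simp only: Ysc)
  also have "\<dots> \<longleftrightarrow> ?p \<le> ?q" by simp
  finally show "f_word c (reading_word r m (stt T i c)) = None \<longleftrightarrow> ?p \<le> ?q" .
qed

end



context tab begin

lemma block: "d \<le> i \<Longrightarrow> 1 \<le> i \<Longrightarrow> i \<le> r \<Longrightarrow>
  bzl_apply (rev [Suc (i - d)..<Suc i]) (reading_word r m (stt T i i)) = reading_word r m (stt T i (i - d))"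
proof (induction d)
  case 0 then show ?case by simp
next
  case (Suc d)
  have u: "[Suc (i - Suc d)..<Suc i] = (i - d) # [Suc (i - d)..<Suc i]"
    using Suc.prems upt_conv_Cons[of "Suc (i - Suc d)" "Suc i"] by (simp add: Suc_diff_Suc)
  have "bzl_apply (rev [Suc (i - Suc d)..<Suc i]) (reading_word r m (stt T i i))
      = bzl_apply [i - d] (bzl_apply (rev [Suc (i - d)..<Suc i]) (reading_word r m (stt T i i)))"
    by (simp only: u rev.simps bzl_apply_append)
  also have "\<dots> = bzl_apply [i - d] (reading_word r m (stt T i (i - d)))"
  proof -
    have "d \<le> i" using Suc.prems by simp
    from Suc.IH[OF this Suc.prems(2) Suc.prems(3)] show ?thesis by (simp only:)
  qed
  also have "\<dots> = reading_word r m (stt T i (i - d - 1))" by (rule step(1)) (use Suc.prems in simp_all)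
  also have "i - d - 1 = i - Suc d" by simp
  finally show ?case .
qed

lemma rw_cong: "(\<And>k col. cell k col \<Longrightarrow> S' k col = S k col) \<Longrightarrow> reading_word r m S' = reading_word r m S"
proof -
  assume h: "\<And>k col. cell k col \<Longrightarrow> S' k col = S k col"
  have "concat (map (colw r m S') (rev [1..<Suc (L 1)])) = map id (concat (map (colw r m S) (rev [1..<Suc (L 1)])))"
  proof (rule colw_map, intro ballI)
    fix col k assume "col \<in> set (rev [1..<Suc (L 1)])" "k \<in> {1..col_height r m col}"
    then have "cell k col" using cell_iff[of col k] by auto
    then show "S' k col = id (S k col)" using h by simp
  qed
  then show ?thesis by (simp add: rw_eq)
qed

lemma init: "1 \<le> i \<Longrightarrow> i \<le> r \<Longrightarrow> bzl_apply (lw (i - 1)) (reading_word r m T) = reading_word r m (stt T i i)"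
proof (induction i)
  case 0 then show ?case by simp
next
  case (Suc n)
  show ?case
  proof (cases "n = 0")
    case True
    have "reading_word r m (stt T 1 1) = reading_word r m T"
    proof (rule rw_cong)
      fix k col assume c: "cell k col"
      have "k \<le> T k col" "1 \<le> k" using ge_row[OF c] c by (auto simp: cell_def)
      then show "stt T 1 1 k col = T k col" by (auto simp: stt_def)
    qed
    then show ?thesis using True by simp
  next
    case False
    have lwn: "lw n = lw (n - 1) @ rev [1..<Suc n]" using False lw.simps(2)[of "n - 1"] by simp
    have "bzl_apply (lw (Suc n - 1)) (reading_word r m T) = bzl_apply (rev [1..<Suc n]) (bzl_apply (lw (n - 1)) (reading_word r m T))"
      by (simp add: lwn bzl_apply_append)
    also have "\<dots> = bzl_apply (rev [Suc (n - n)..<Suc n]) (reading_word r m (stt T n n))" using Suc False by simp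
    also have "\<dots> = reading_word r m (stt T n (n - n))" using block[of n n] Suc.prems False by simp
    also have "\<dots> = reading_word r m (stt T (Suc n) (Suc n))"
    proof (rule rw_cong)
      fix k col assume c: "cell k col"
      have "k \<le> T k col" "1 \<le> k" using ge_row[OF c] c by (auto simp: cell_def)
      then show "stt T n (n - n) k col = stt T (Suc n) (Suc n) k col" by (auto simp: stt_def)
    qed
    finally show ?thesis .
  qed
qed

lemma bb1: assumes "1 \<le> c" "c \<le> r" "i \<le> r" shows "bold_b r m T c i = L c - pp i c"
proof -
  have "{col\<in>{1..L c}. Suc i \<le> T c col} = {Suc (pp i c)..L c}"
  proof (rule set_eqI)
    fix col show "(col \<in> {col\<in>{1..L c}. Suc i \<le> T c col}) = (col \<in> {Suc (pp i c)..L c})"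
    proof (cases "1 \<le> col \<and> col \<le> L c")
      case True then show ?thesis using pchar[OF assms(1,2), of col i] by auto
    next
      case False then show ?thesis by auto
    qed
  qed
  then show ?thesis using assms by (simp add: bold_b_def)
qed

lemma bb2: assumes "1 \<le> c" "c \<le> i" "i \<le> r" shows "bold_b r m T (Suc c) (Suc i) = L (Suc c) - qq i c"
proof (cases "c = r")
  case True then show ?thesis using L_zero[of "Suc r"] by (simp add: bold_b_def)
next
  case cr: False
  show ?thesis
  proof (cases "i = r")
    case True
    have "{col\<in>{1..L (Suc c)}. T (Suc c) col \<le> Suc i} = {1..L (Suc c)}"
    proof -
      { fix col assume "col \<in> {1..L (Suc c)}"
        then have "cell (Suc c) col" using cr assms by (auto simp: cell_def)
        then have "T (Suc c) col \<le> Suc i" using ent True by blast }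
      then show ?thesis by auto
    qed
    then have "qq i c = L (Suc c)" by (simp add: qq_def)
    then show ?thesis using True by (simp add: bold_b_def)
  next
    case False
    have "{col\<in>{1..L (Suc c)}. Suc (Suc i) \<le> T (Suc c) col} = {Suc (qq i c)..L (Suc c)}"
    proof (rule set_eqI)
      fix col show "(col \<in> {col\<in>{1..L (Suc c)}. Suc (Suc i) \<le> T (Suc c) col}) = (col \<in> {Suc (qq i c)..L (Suc c)})"
      proof (cases "1 \<le> col \<and> col \<le> L (Suc c)")
        case True then show ?thesis using qchar[OF assms(1), of col i] by auto
      next
        case False then show ?thesis by auto
      qed
    qed
    then show ?thesis using False cr assms by (simp add: bold_b_def)
  qed
qed

lemma BII: assumes "1 \<le> c" "c \<le> i" "i \<le> r" shows "boxed_BII r m T c i \<longleftrightarrow> pp i c \<le> qq i c"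
proof -
  have "L (Suc c) \<le> L c" using L_mono by simp
  moreover have "qq i c \<le> L (Suc c)" by (rule q_le)
  moreover have "pp i c \<le> L c" by (rule p_le)
  ultimately show ?thesis using bb1[of c i] bb2[OF assms] assms
    by (auto simp: boxed_BII_def theta_def)
qed

end

lemma lw_len2: "2 * length (lw n) = n * (n + 1)"
  by (induction n) (auto simp: algebra_simps)

lemma lw_prefix: "i \<le> r \<Longrightarrow> \<exists>zs. lw r = lw i @ zs"
proof (induction r)
  case 0 then show ?case by simp
next
  case (Suc r)
  show ?case
  proof (cases "i = Suc r")
    case True then show ?thesis by simp
  next
    case False
    then obtain zs where "lw r = lw i @ zs" using Suc by auto
    then show ?thesis by simp
  qed
qed

theorem mainTheorem4:
  fixes r :: nat and m :: "nat \<Rightarrow> nat" and T :: "nat \<Rightarrow> nat \<Rightarrow> nat" and i j :: nat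
  assumes "1 \<le> r"
    and "SSYT r m T"
    and "1 \<le> j" and "j \<le> i" and "i \<le> r"
  shows "boxed_BI r (reading_word r m T) (tri_idx i j) \<longleftrightarrow> boxed_BII r m T (i - j + 1) i"
proof -
  interpret tab r m T using assms(1,2) by unfold_locales
  define c where "c = i - j + 1"
  have c1: "1 \<le> c" "c \<le> i" using assms by (auto simp: c_def)
  obtain zs where zs: "lw r = lw i @ zs" using lw_prefix[OF assms(5)] by blast
  have li: "lw i = lw (i - 1) @ rev [1..<Suc i]" using lw.simps(2)[of "i - 1"] assms by simp
  have "[1..<Suc i] = [1..<Suc c] @ [Suc c..<Suc i]" using upt_split2[of 1 "Suc c" "Suc i"] c1 by simp
  moreover have "[1..<Suc c] = [1..<c] @ [c]" using c1 by simp
  ultimately have ri: "rev [1..<Suc i] = rev [Suc c..<Suc i] @ c # rev [1..<c]" by simp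
  define A where "A = lw (i - 1) @ rev [Suc c..<Suc i]"
  have lwr: "lw r = A @ c # (rev [1..<c] @ zs)" using zs li ri by (simp add: A_def)
  have "2 * length (lw (i - 1)) = (i - 1) * i" using lw_len2[of "i - 1"] assms by simp
  then have "length (lw (i - 1)) = i * (i - 1) div 2" by (simp add: mult.commute)
  then have LA: "length A = i * (i - 1) div 2 + (i - c)" by (simp add: A_def del: upt_Suc)
  have "i - c = j - 1" using assms by (simp add: c_def)
  then have K: "tri_idx i j - 1 = length A" using assms LA by (simp add: tri_idx_def)
  have nth: "lw r ! (tri_idx i j - 1) = c" unfolding K lwr by simp
  have tk: "take (tri_idx i j - 1) (lw r) = A" unfolding K lwr by simp
  have cc: "c = i - (j - 1)" using assms by (simp add: c_def)
  have I: "bzl_apply (lw (i - 1)) (reading_word r m T) = reading_word r m (stt T i i)"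
    by (rule init) (use assms in simp_all)
  have Bk: "bzl_apply (rev [Suc (i - (j - 1))..<Suc i]) (reading_word r m (stt T i i)) = reading_word r m (stt T i (i - (j - 1)))"
    by (rule block) (use assms in simp_all)
  have "bzl_apply A (reading_word r m T) = bzl_apply (rev [Suc c..<Suc i]) (bzl_apply (lw (i - 1)) (reading_word r m T))"
    by (simp only: A_def bzl_apply_append)
  also have "\<dots> = reading_word r m (stt T i c)" by (simp only: I Bk cc)
  finally have BA: "bzl_apply A (reading_word r m T) = reading_word r m (stt T i c)" .
  have "boxed_BI r (reading_word r m T) (tri_idx i j) \<longleftrightarrow> f_word c (reading_word r m (stt T i c)) = None"
    unfolding boxed_BI_def nth tk BA ..
  also have "\<dots> \<longleftrightarrow> pp i c \<le> qq i c" using step(2)[OF c1 assms(5)] .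
  also have "\<dots> \<longleftrightarrow> boxed_BII r m T c i" using BII[OF c1 assms(5)] by simp
  finally show ?thesis by (simp add: c_def)
qed


end
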